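(* Let $\mathfrak B$ be a Boolean algebra. Then $\mathfrak B$ carries a strictly positive nonatomic finitely additive probability measure if and only if there is a decomposition $\mathfrak B\setminus\{0\}=\bigcup_{n<\omega}\mathfrak B_n$ such that for each $n<\omega$: (i) $\mathfrak B_n\subseteq\mathfrak B_{n+1}$; (ii) $\mathrm{int}(\mathfrak B_n)\ge 2^{-n}$; (iii) for every $a\in\mathfrak B_n$ there are disjoint $b,c\in\mathfrak B_{n+1}$ with $b\vee c\le a$.
   Context: A (finitely additive) measure on a Boolean algebra $\mathfrak B$ is a function $\mu:\mathfrak B\to[0,\infty)$ with $\mu(a\vee b)=\mu(a)+\mu(b)$ whenever $a\wedge b=0$; it is a probability if $\mu(1)=1$, and strictly positive if $\mu(a)>0$ for all $a\ne 0$. A measure $\mu$ is nonatomic if for every $\varepsilon>0$ there is a finite partition of $1_{\mathfrak B}$ into pairwise disjoint elements each of measure $<\varepsilon$. Elements $b,c$ are disjoint if $b\wedge c=0$. For a family $\mathcal F\subseteq\mathfrak B\setminus\{0\}$, the intersection number $\mathrm{int}(\mathcal F)$ is the supremum of all $\alpha\ge0$ such that for every finite sequence $a_1,\dots,a_m$ of elements of $\mathcal F$ (repetitions allowed) there is a set $I\subseteq\{1,\dots,m\}$ with $|I|\ge\alpha m$ and $\bigwedge_{i\in I}a_i\ne 0$. *)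

theory Defs
  imports Complex_Main "HOL-Library.Extended_Real"
begin

definition fa_measure :: "('a::boolean_algebra \<Rightarrow> real) \<Rightarrow> bool" where
  "fa_measure \<mu> \<longleftrightarrow> (\<forall>a. \<mu> a \<ge> 0) \<and>
     (\<forall>a b. inf a b = bot \<longrightarrow> \<mu> (sup a b) = \<mu> a + \<mu> b)"

definition fa_probability :: "('a::boolean_algebra \<Rightarrow> real) \<Rightarrow> bool" where
  "fa_probability \<mu> \<longleftrightarrow> fa_measure \<mu> \<and> \<mu> top = 1"

definition strictly_positive :: "('a::boolean_algebra \<Rightarrow> real) \<Rightarrow> bool" where
  "strictly_positive \<mu> \<longleftrightarrow> (\<forall>a. a \<noteq> bot \<longrightarrow> \<mu> a > 0)"

definition finite_partition_of_unit :: "'a::boolean_algebra list \<Rightarrow> bool" where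
  "finite_partition_of_unit ps \<longleftrightarrow>
     foldr sup ps bot = top \<and>
     (\<forall>i<length ps. \<forall>j<length ps. i \<noteq> j \<longrightarrow> inf (ps ! i) (ps ! j) = bot)"

definition nonatomic :: "('a::boolean_algebra \<Rightarrow> real) \<Rightarrow> bool" where
  "nonatomic \<mu> \<longleftrightarrow> (\<forall>\<epsilon>>0. \<exists>ps. finite_partition_of_unit ps \<and> (\<forall>p\<in>set ps. \<mu> p < \<epsilon>))"

definition meet_idx :: "'a::boolean_algebra list \<Rightarrow> nat set \<Rightarrow> 'a" where
  "meet_idx xs I = foldr inf (map (nth xs) (sorted_list_of_set I)) top"

definition int_good :: "real \<Rightarrow> 'a::boolean_algebra set \<Rightarrow> bool" where
  "int_good \<alpha> F \<longleftrightarrow> (\<forall>xs. set xs \<subseteq> F \<longrightarrow>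
     (\<exists>I\<subseteq>{..<length xs}. real (card I) \<ge> \<alpha> * real (length xs) \<and> meet_idx xs I \<noteq> bot))"

text \<open>Intersection number, as a supremum in the extended reals (int of the empty family is infinite).\<close>
definition int_num :: "'a::boolean_algebra set \<Rightarrow> ereal" where
  "int_num F = Sup {ereal \<alpha> | \<alpha>. \<alpha> \<ge> 0 \<and> int_good \<alpha> F}"

end

theory Submission
  imports Defs "HOL-Analysis.Analysis"
begin

lemma fa_bot: "fa_measure \<mu> \<Longrightarrow> \<mu> bot = 0"
  unfolding fa_measure_def by (metis inf_bot_left sup_bot_left add_cancel_right_right)

lemma fa_nonneg: "fa_measure \<mu> \<Longrightarrow> 0 \<le> \<mu> a"
  unfolding fa_measure_def by auto

lemma fa_add: "fa_measure \<mu> \<Longrightarrow> inf a b = bot \<Longrightarrow> \<mu> (sup a b) = \<mu> a + \<mu> b"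
  unfolding fa_measure_def by auto

lemma fa_split: "fa_measure \<mu> \<Longrightarrow> \<mu> a = \<mu> (inf a b) + \<mu> (inf a (- b))"
proof -
  assume m: "fa_measure \<mu>"
  have "inf (inf a b) (inf a (- b)) = bot"
    by (metis inf_bot_right inf_compl_bot inf_left_commute inf.commute inf.assoc)
  moreover have "sup (inf a b) (inf a (- b)) = a"
    by (simp add: inf_sup_distrib1[symmetric])
  ultimately show ?thesis using fa_add[OF m, of "inf a b" "inf a (-b)"] by simp
qed

lemma fa_mono: "fa_measure \<mu> \<Longrightarrow> a \<le> b \<Longrightarrow> \<mu> a \<le> \<mu> b"
proof -
  assume m: "fa_measure \<mu>" and ab: "a \<le> b"
  have "\<mu> b = \<mu> (inf b a) + \<mu> (inf b (- a))" by (rule fa_split[OF m])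
  moreover have "inf b a = a" using ab by (simp add: inf.absorb2)
  ultimately show ?thesis using fa_nonneg[OF m, of "inf b (-a)"] by simp
qed

fun pdj :: "'a::boolean_algebra list \<Rightarrow> bool" where
  "pdj [] = True"
| "pdj (x # xs) = ((\<forall>y\<in>set xs. inf x y = bot) \<and> pdj xs)"

lemma pdj_append: "pdj (xs @ ys) \<longleftrightarrow> pdj xs \<and> pdj ys \<and> (\<forall>x\<in>set xs. \<forall>y\<in>set ys. inf x y = bot)"
  by (induction xs) auto

lemma pdj_nth: "pdj xs \<longleftrightarrow> (\<forall>i<length xs. \<forall>j<length xs. i \<noteq> j \<longrightarrow> inf (xs ! i) (xs ! j) = bot)"
proof (induction xs)
  case Nil
  then show ?case by simp
next
  case (Cons x xs)
  show ?case
  proof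
    assume h: "pdj (x # xs)"
    show "\<forall>i<length (x # xs). \<forall>j<length (x # xs). i \<noteq> j \<longrightarrow> inf ((x # xs) ! i) ((x # xs) ! j) = bot"
    proof (intro allI impI)
      fix i j assume i: "i < length (x # xs)" and j: "j < length (x # xs)" and ij: "i \<noteq> j"
      show "inf ((x # xs) ! i) ((x # xs) ! j) = bot"
      proof (cases i)
        case 0
        then obtain j' where "j = Suc j'" using ij by (cases j) auto
        then show ?thesis using h j 0 by (auto simp: nth_mem)
      next
        case (Suc i')
        show ?thesis
        proof (cases j)
          case 0
          then show ?thesis using h i Suc by (auto simp: nth_mem inf_commute)
        next
          case (Suc j')
          then show ?thesis using h i j ij Cons.IH \<open>i = Suc i'\<close> by auto
        qed
      qed
    qed
  next
    assume h: "\<forall>i<length (x # xs). \<forall>j<length (x # xs). i \<noteq> j \<longrightarrow> inf ((x # xs) ! i) ((x # xs) ! j) = bot"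
    have "\<forall>y\<in>set xs. inf x y = bot"
    proof
      fix y assume "y \<in> set xs"
      then obtain j where "j < length xs" "xs ! j = y" by (auto simp: in_set_conv_nth)
      then show "inf x y = bot" using h[rule_format, of 0 "Suc j"] by auto
    qed
    moreover have "pdj xs" using Cons.IH h by (metis Suc_less_eq length_Cons nat.inject nth_Cons_Suc)
    ultimately show "pdj (x # xs)" by simp
  qed
qed

lemma inf_join_bot: "(\<forall>q\<in>set ps. inf p q = bot) \<Longrightarrow> inf (p::'a::boolean_algebra) (foldr sup ps bot) = bot"
  by (induction ps) (auto simp: inf_sup_distrib1)

lemma join_le: "(\<forall>p\<in>set ps. p \<le> a) \<Longrightarrow> foldr sup ps (bot::'a::boolean_algebra) \<le> a"
  by (induction ps) auto

lemma le_join: "p \<in> set ps \<Longrightarrow> p \<le> foldr sup ps (bot::'a::boolean_algebra)"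
  by (induction ps) (auto intro: le_supI2)

lemma fa_join: "fa_measure \<mu> \<Longrightarrow> pdj ps \<Longrightarrow> \<mu> (foldr sup ps bot) = sum_list (map \<mu> ps)"
proof (induction ps)
  case Nil
  then show ?case by (simp add: fa_bot)
next
  case (Cons p ps)
  then show ?case using fa_add[OF Cons.prems(1) inf_join_bot[of ps p]] by simp
qed

lemma join_append: "foldr sup (xs @ ys) (bot::'a::boolean_algebra) = sup (foldr sup xs bot) (foldr sup ys bot)"
  by (induction xs) (auto simp: sup_assoc)

lemma join_map_inf: "foldr sup (map (\<lambda>y. inf y c) D) (bot::'a::boolean_algebra) = inf (foldr sup D bot) c"
  by (induction D) (auto simp: inf_sup_distrib2)

lemma pdj_map_inf: "pdj D \<Longrightarrow> pdj (map (\<lambda>y. inf y c) D)"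
  by (induction D) (auto, metis inf_assoc inf_bot_left inf_commute inf_left_commute)

fun disj :: "'a::boolean_algebra list \<Rightarrow> 'a list" where
  "disj [] = []"
| "disj (x # xs) = x # map (\<lambda>y. inf y (- x)) (disj xs)"

lemma disj_join: "foldr sup (disj xs) (bot::'a::boolean_algebra) = foldr sup xs bot"
proof (induction xs)
  case Nil then show ?case by simp
next
  case (Cons x xs)
  have "sup x (inf (foldr sup xs bot) (- x)) = sup x (foldr sup xs bot)"
    by (simp add: sup_inf_distrib1)
  then show ?case using Cons by (simp add: join_map_inf)
qed

lemma disj_pdj: "pdj (disj xs)"
proof (induction xs)
  case Nil then show ?case by simp
next
  case (Cons x xs)
  have "\<forall>y\<in>set (disj xs). inf x (inf y (- x)) = bot"
    by (metis inf_compl_bot inf_left_commute inf_bot_right)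
  then show ?case using Cons by (simp add: pdj_map_inf)
qed

lemma disj_le: "p \<in> set (disj xs) \<Longrightarrow> \<exists>x\<in>set xs. p \<le> x"
proof (induction xs arbitrary: p)
  case Nil then show ?case by simp
next
  case (Cons x xs)
  then show ?case by (auto intro: le_infI1)
qed

lemma foldr_inf_ge: "(\<forall>y\<in>set L. t \<le> y) \<Longrightarrow> t \<le> foldr inf L (top::'a::boolean_algebra)"
  by (induction L) auto

lemma foldr_inf_le: "y \<in> set L \<Longrightarrow> foldr inf L (top::'a::boolean_algebra) \<le> y"
  by (induction L) (auto intro: le_infI2)

lemma meet_idx_ge: "finite I \<Longrightarrow> (\<forall>i\<in>I. t \<le> xs ! i) \<Longrightarrow> t \<le> meet_idx xs I"
  unfolding meet_idx_def by (intro foldr_inf_ge) auto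

lemma meet_idx_le: "finite I \<Longrightarrow> i \<in> I \<Longrightarrow> meet_idx xs I \<le> xs ! i"
  unfolding meet_idx_def by (intro foldr_inf_le) auto

lemma kelley_easy_gen:
  assumes m: "fa_measure \<mu>"
  shows "\<exists>I\<subseteq>{..<length xs}. \<exists>t. (e \<noteq> bot \<longrightarrow> t \<noteq> bot) \<and> t \<le> e \<and> (\<forall>i\<in>I. t \<le> xs ! i) \<and>
           (\<Sum>i<length xs. \<mu> (inf (xs ! i) e)) \<le> real (card I) * \<mu> e"
proof (induction xs arbitrary: e)
  case Nil
  show ?case by (intro exI[of _ "{}"]) (auto intro: exI[of _ e])
next
  case (Cons a xs)
  define e1 where "e1 = inf e a"
  define e2 where "e2 = inf e (- a)"
  obtain I1 t1 where I1: "I1 \<subseteq> {..<length xs}" "e1 \<noteq> bot \<longrightarrow> t1 \<noteq> bot" "t1 \<le> e1" "\<forall>i\<in>I1. t1 \<le> xs ! i"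
    "(\<Sum>i<length xs. \<mu> (inf (xs ! i) e1)) \<le> real (card I1) * \<mu> e1"
    using Cons.IH[of e1] by blast
  obtain I2 t2 where I2: "I2 \<subseteq> {..<length xs}" "e2 \<noteq> bot \<longrightarrow> t2 \<noteq> bot" "t2 \<le> e2" "\<forall>i\<in>I2. t2 \<le> xs ! i"
    "(\<Sum>i<length xs. \<mu> (inf (xs ! i) e2)) \<le> real (card I2) * \<mu> e2"
    using Cons.IH[of e2] by blast
  have split: "\<mu> (inf x e) = \<mu> (inf x e1) + \<mu> (inf x e2)" for x
    using fa_split[OF m, of "inf x e" a] unfolding e1_def e2_def by (simp add: inf_assoc)
  have sumsplit: "(\<Sum>i<length xs. \<mu> (inf (xs ! i) e)) =
      (\<Sum>i<length xs. \<mu> (inf (xs ! i) e1)) + (\<Sum>i<length xs. \<mu> (inf (xs ! i) e2))"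
    by (simp add: split sum.distrib)
  have ae: "\<mu> (inf a e) = \<mu> e1" unfolding e1_def by (simp add: inf_commute)
  have esplit: "\<mu> e = \<mu> e1 + \<mu> e2" using fa_split[OF m, of e a] unfolding e1_def e2_def .
  have S: "(\<Sum>i<length (a # xs). \<mu> (inf ((a # xs) ! i) e)) =
      \<mu> e1 + (\<Sum>i<length xs. \<mu> (inf (xs ! i) e1)) + (\<Sum>i<length xs. \<mu> (inf (xs ! i) e2))"
    by (simp only: length_Cons sum.lessThan_Suc_shift) (simp add: sumsplit ae)
  have n1: "0 \<le> \<mu> e1" "0 \<le> \<mu> e2" using fa_nonneg[OF m] by auto
  have ebot: "e \<noteq> bot \<Longrightarrow> e1 \<noteq> bot \<or> e2 \<noteq> bot"
    unfolding e1_def e2_def by (metis inf_sup_distrib1 sup_bot_left sup_compl_top inf_top_right)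
  have z1: "e1 = bot \<Longrightarrow> \<mu> e1 = 0" using fa_bot[OF m] by simp
  have z2: "e2 = bot \<Longrightarrow> \<mu> e2 = 0" using fa_bot[OF m] by simp
  define J1 where "J1 = insert 0 (Suc ` I1)"
  have cJ1: "card J1 = Suc (card I1)"
  proof -
    have "finite I1" using I1(1) finite_subset by blast
    then show ?thesis unfolding J1_def by (simp add: card_image)
  qed
  have opt1: "?case" if c: "e1 \<noteq> bot \<or> e = bot" and ineq: "real (card I2) * \<mu> e2 \<le> real (Suc (card I1)) * \<mu> e2"
  proof (intro exI[of _ J1] conjI exI[of _ t1])
    show "J1 \<subseteq> {..<length (a # xs)}" using I1(1) unfolding J1_def by auto
    show "e \<noteq> bot \<longrightarrow> t1 \<noteq> bot" using c I1(2) by auto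
    show "t1 \<le> e" using I1(3) unfolding e1_def by auto
    show "\<forall>i\<in>J1. t1 \<le> (a # xs) ! i" using I1(3,4) unfolding J1_def e1_def by auto
    have "(\<Sum>i<length (a # xs). \<mu> (inf ((a # xs) ! i) e)) \<le> \<mu> e1 + real (card I1) * \<mu> e1 + real (card I2) * \<mu> e2"
      using S I1(5) I2(5) by linarith
    also have "\<dots> \<le> real (Suc (card I1)) * \<mu> e1 + real (Suc (card I1)) * \<mu> e2"
      using ineq by (simp add: algebra_simps)
    also have "\<dots> = real (card J1) * \<mu> e" using cJ1 esplit by (simp add: algebra_simps)
    finally show "(\<Sum>i<length (a # xs). \<mu> (inf ((a # xs) ! i) e)) \<le> real (card J1) * \<mu> e" .
  qed
  define J2 where "J2 = Suc ` I2"
  have cJ2: "card J2 = card I2" unfolding J2_def by (simp add: card_image)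
  have opt2: "?case" if c: "e2 \<noteq> bot" and ineq: "real (Suc (card I1)) * \<mu> e1 \<le> real (card I2) * \<mu> e1"
  proof (intro exI[of _ J2] conjI exI[of _ t2])
    show "J2 \<subseteq> {..<length (a # xs)}" using I2(1) unfolding J2_def by auto
    show "e \<noteq> bot \<longrightarrow> t2 \<noteq> bot" using c I2(2) by auto
    show "t2 \<le> e" using I2(3) unfolding e2_def by auto
    show "\<forall>i\<in>J2. t2 \<le> (a # xs) ! i" using I2(4) unfolding J2_def by auto
    have "(\<Sum>i<length (a # xs). \<mu> (inf ((a # xs) ! i) e)) \<le> \<mu> e1 + real (card I1) * \<mu> e1 + real (card I2) * \<mu> e2"
      using S I1(5) I2(5) by linarith
    also have "\<dots> \<le> real (card I2) * \<mu> e1 + real (card I2) * \<mu> e2"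
      using ineq by (simp add: algebra_simps)
    also have "\<dots> = real (card J2) * \<mu> e" using cJ2 esplit by (simp add: algebra_simps)
    finally show "(\<Sum>i<length (a # xs). \<mu> (inf ((a # xs) ! i) e)) \<le> real (card J2) * \<mu> e" .
  qed
  show ?case
  proof (cases "e1 = bot")
    case True
    show ?thesis
    proof (cases "e = bot")
      case True
      then show ?thesis using opt1 z1 z2 \<open>e1 = bot\<close> by (simp add: e2_def)
    next
      case False
      then have "e2 \<noteq> bot" using ebot \<open>e1 = bot\<close> by auto
      then show ?thesis using opt2 z1 \<open>e1 = bot\<close> by simp
    qed
  next
    case False
    show ?thesis
    proof (cases "e2 = bot")
      case True
      then show ?thesis using opt1 z2 False by simp
    next
      case e2nb: False
      show ?thesis
      proof (cases "real (card I2) \<le> real (Suc (card I1))")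
        case True
        then show ?thesis using opt1 False n1 by (simp add: mult_right_mono)
      next
        case nle: False
        then show ?thesis using opt2 e2nb n1 by (simp add: mult_right_mono)
      qed
    qed
  qed
qed

lemma kelley_easy:
  assumes m: "fa_probability \<mu>" and nt: "(bot::'a::boolean_algebra) \<noteq> top"
  shows "int_good \<alpha> {a::'a. \<alpha> \<le> \<mu> a}"
  unfolding int_good_def
proof (intro allI impI)
  fix xs :: "'a list" assume xs: "set xs \<subseteq> {a. \<alpha> \<le> \<mu> a}"
  have fm: "fa_measure \<mu>" and t1: "\<mu> top = 1" using m unfolding fa_probability_def by auto
  obtain I t where I: "I \<subseteq> {..<length xs}" "(top::'a) \<noteq> bot \<longrightarrow> t \<noteq> bot" "\<forall>i\<in>I. t \<le> xs ! i"
    "(\<Sum>i<length xs. \<mu> (inf (xs ! i) top)) \<le> real (card I) * \<mu> top"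
    using kelley_easy_gen[OF fm, of xs top] by blast
  have "\<alpha> * real (length xs) = (\<Sum>i<length xs. \<alpha>)" by simp
  also have "\<dots> \<le> (\<Sum>i<length xs. \<mu> (xs ! i))"
  proof (rule sum_mono)
    fix i assume "i \<in> {..<length xs}"
    then have "xs ! i \<in> set xs" by simp
    then show "\<alpha> \<le> \<mu> (xs ! i)" using xs by blast
  qed
  also have "\<dots> \<le> real (card I)" using I(4) t1 by simp
  finally have c: "\<alpha> * real (length xs) \<le> real (card I)" .
  have fin: "finite I" using I(1) by (rule finite_subset) simp
  have "t \<le> meet_idx xs I" using meet_idx_ge[OF fin I(3)] .
  moreover have "t \<noteq> bot" using I(2) nt by auto
  ultimately have "meet_idx xs I \<noteq> bot" by (metis le_bot)
  then show "\<exists>I\<subseteq>{..<length xs}. \<alpha> * real (length xs) \<le> real (card I) \<and> meet_idx xs I \<noteq> bot"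
    using I(1) c by blast
qed

lemma split_lemma:
  assumes m: "fa_measure \<mu>"
  shows "pdj ps \<Longrightarrow> (\<forall>p\<in>set ps. \<mu> (inf a p) < \<delta>) \<Longrightarrow> 0 \<le> lo \<Longrightarrow> lo < \<mu> (inf a (foldr sup ps bot))
    \<Longrightarrow> \<exists>b. b \<le> inf a (foldr sup ps bot) \<and> lo < \<mu> b \<and> \<mu> b < lo + \<delta>"
proof (induction ps arbitrary: lo)
  case Nil
  then show ?case using fa_bot[OF m] by simp
next
  case (Cons p ps)
  define J where "J = foldr sup ps bot"
  have pJ: "inf p J = bot" using Cons.prems(1) inf_join_bot unfolding J_def by auto
  have "inf (inf a p) (inf a J) = inf a (inf p J)" by (simp add: inf_aci)
  then have d: "inf (inf a p) (inf a J) = bot" using pJ by simp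
  have eq: "inf a (foldr sup (p # ps) bot) = sup (inf a p) (inf a J)"
    unfolding J_def by (simp add: inf_sup_distrib1)
  have meq: "\<mu> (inf a (foldr sup (p # ps) bot)) = \<mu> (inf a p) + \<mu> (inf a J)"
    using eq fa_add[OF m d] by simp
  show ?case
  proof (cases "lo < \<mu> (inf a p)")
    case True
    have "\<mu> (inf a p) < \<delta>" using Cons.prems(2) by simp
    then show ?thesis using True Cons.prems(3) eq by (intro exI[of _ "inf a p"]) auto
  next
    case False
    define lo' where "lo' = lo - \<mu> (inf a p)"
    have "0 \<le> lo'" "lo' < \<mu> (inf a J)" using False Cons.prems(4) meq unfolding lo'_def by auto
    then obtain b' where b': "b' \<le> inf a J" "lo' < \<mu> b'" "\<mu> b' < lo' + \<delta>"
      using Cons.IH[of lo'] Cons.prems(1,2) unfolding J_def by auto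
    have "inf (inf a p) b' \<le> inf (inf a p) (inf a J)" using b'(1) by (rule inf_mono[OF order_refl])
    then have "inf (inf a p) b' \<le> bot" using d by simp
    then have d2: "inf (inf a p) b' = bot" by (rule le_bot)
    have "\<mu> (sup (inf a p) b') = \<mu> (inf a p) + \<mu> b'" using fa_add[OF m d2] .
    moreover have "sup (inf a p) b' \<le> inf a (foldr sup (p # ps) bot)"
      using eq b'(1) by (simp add: le_supI2)
    ultimately show ?thesis using b' unfolding lo'_def by (intro exI[of _ "sup (inf a p) b'"]) auto
  qed
qed

lemma forward:
  assumes nt: "(bot::'a::boolean_algebra) \<noteq> top"
    and mu: "fa_probability \<mu>" "strictly_positive \<mu>" "nonatomic (\<mu>::'a \<Rightarrow> real)"
  shows "\<exists>B :: nat \<Rightarrow> 'a set. (\<Union>n. B n) = UNIV - {bot} \<and>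
        (\<forall>n. B n \<subseteq> B (Suc n)) \<and>
        (\<forall>n. int_num (B n) \<ge> ereal ((1/2) ^ n)) \<and>
        (\<forall>n. \<forall>a\<in>B n. \<exists>b\<in>B (Suc n). \<exists>c\<in>B (Suc n). inf b c = bot \<and> sup b c \<le> a)"
proof -
  have m: "fa_measure \<mu>" and t1: "\<mu> top = 1" using mu(1) unfolding fa_probability_def by auto
  define B where "B n = {a. (1/2::real) ^ n < \<mu> a}" for n
  have "(\<Union>n. B n) = UNIV - {bot}"
  proof
    show "(\<Union>n. B n) \<subseteq> UNIV - {bot}"
    proof
      fix a assume "a \<in> (\<Union>n. B n)"
      then obtain n where "(1/2::real) ^ n < \<mu> a" unfolding B_def by auto
      moreover have "(0::real) < (1/2) ^ n" by simp
      ultimately show "a \<in> UNIV - {bot}" using fa_bot[OF m] by auto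
    qed
    show "UNIV - {bot} \<subseteq> (\<Union>n. B n)"
    proof
      fix a :: 'a assume "a \<in> UNIV - {bot}"
      then have "0 < \<mu> a" using mu(2) unfolding strictly_positive_def by auto
      then obtain n where "(1/2::real) ^ n < \<mu> a" using real_arch_pow_inv[of "\<mu> a" "1/2"] by auto
      then show "a \<in> (\<Union>n. B n)" unfolding B_def by auto
    qed
  qed
  moreover have "\<forall>n. B n \<subseteq> B (Suc n)"
  proof (intro allI subsetI)
    fix n a assume "a \<in> B n"
    then have "(1/2::real)^n < \<mu> a" unfolding B_def by blast
    moreover have "(1/2::real) ^ Suc n \<le> (1/2) ^ n" by (simp add: power_decreasing)
    ultimately have "(1/2::real)^Suc n < \<mu> a" by linarith
    then show "a \<in> B (Suc n)" unfolding B_def by blast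
  qed
  moreover have "\<forall>n. int_num (B n) \<ge> ereal ((1/2) ^ n)"
  proof
    fix n
    have g: "int_good ((1/2) ^ n) {a. (1/2) ^ n \<le> \<mu> a}" by (rule kelley_easy[OF mu(1) nt])
    have "B n \<subseteq> {a. (1/2) ^ n \<le> \<mu> a}" unfolding B_def by auto
    then have "int_good ((1/2) ^ n) (B n)"
      using g unfolding int_good_def by (meson subset_trans)
    then have "ereal ((1/2) ^ n) \<in> {ereal \<alpha> | \<alpha>. \<alpha> \<ge> 0 \<and> int_good \<alpha> (B n)}" by auto
    then show "int_num (B n) \<ge> ereal ((1/2) ^ n)" unfolding int_num_def by (rule Sup_upper)
  qed
  moreover have "\<forall>n. \<forall>a\<in>B n. \<exists>b\<in>B (Suc n). \<exists>c\<in>B (Suc n). inf b c = bot \<and> sup b c \<le> a"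
  proof (intro allI ballI)
    fix n a assume a: "a \<in> B n"
    define \<delta> where "\<delta> = \<mu> a - (1/2) ^ n"
    have dpos: "0 < \<delta>" using a unfolding B_def \<delta>_def by auto
    obtain ps where ps: "finite_partition_of_unit ps" "\<forall>p\<in>set ps. \<mu> p < \<delta>"
      using mu(3) dpos unfolding nonatomic_def by blast
    have pd: "pdj ps" using ps(1) unfolding finite_partition_of_unit_def pdj_nth by auto
    have jt: "foldr sup ps bot = top" using ps(1) unfolding finite_partition_of_unit_def by auto
    have small: "\<forall>p\<in>set ps. \<mu> (inf a p) < \<delta>"
      using ps(2) fa_mono[OF m] by (meson inf_le2 le_less_trans)
    have lo: "0 \<le> (1/2::real) ^ Suc n" by simp
    have "(1/2::real)^n < \<mu> a" using a unfolding B_def by blast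
    moreover have "(1/2::real) ^ Suc n \<le> (1/2) ^ n" by (simp add: power_decreasing)
    moreover have eqa: "inf a (foldr sup ps bot) = a" using jt by simp
    ultimately have "(1/2::real) ^ Suc n < \<mu> (inf a (foldr sup ps bot))"
      unfolding eqa by linarith
    then obtain b where b: "b \<le> a" "(1/2) ^ Suc n < \<mu> b" "\<mu> b < (1/2) ^ Suc n + \<delta>"
      using split_lemma[OF m pd small lo] jt by auto
    define c where "c = inf a (- b)"
    have mc: "\<mu> c = \<mu> a - \<mu> b"
      using fa_split[OF m, of a b] b(1) unfolding c_def by (simp add: inf.absorb2 inf_commute)
    have "(1/2::real) ^ Suc n < \<mu> c" using mc b(3) unfolding \<delta>_def by simp
    moreover have "inf b c = bot"
    proof -
      have "inf b c = inf a (inf b (- b))" unfolding c_def by (simp add: inf_aci)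
      then show ?thesis by simp
    qed
    moreover have "sup b c \<le> a" unfolding c_def using b(1) by simp
    ultimately show "\<exists>b\<in>B (Suc n). \<exists>c\<in>B (Suc n). inf b c = bot \<and> sup b c \<le> a"
      using b(2) unfolding B_def by blast
  qed
  ultimately show ?thesis by blast
qed

definition ufilter :: "'a::boolean_algebra set \<Rightarrow> bool" where
  "ufilter U \<longleftrightarrow> bot \<notin> U \<and> top \<in> U \<and> (\<forall>x y. x \<in> U \<longrightarrow> x \<le> y \<longrightarrow> y \<in> U) \<and>
     (\<forall>x y. x \<in> U \<longrightarrow> y \<in> U \<longrightarrow> inf x y \<in> U) \<and> (\<forall>x. x \<in> U \<or> - x \<in> U)"

lemma ultra_exists:
  fixes S :: "'a::boolean_algebra set"
  assumes hS: "\<And>xs. set xs \<subseteq> S \<Longrightarrow> foldr sup xs bot \<noteq> top"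
  shows "\<exists>U. ufilter U \<and> (\<forall>x\<in>S. x \<notin> U)"
proof -
  define F0 where "F0 = {y. \<exists>xs. set xs \<subseteq> S \<and> - foldr sup xs bot \<le> y}"
  define isF where "isF F \<longleftrightarrow> bot \<notin> F \<and> (\<forall>x y. x \<in> F \<longrightarrow> x \<le> y \<longrightarrow> y \<in> F) \<and>
      (\<forall>x y. x \<in> F \<longrightarrow> y \<in> F \<longrightarrow> inf x y \<in> F)" for F :: "'a set"
  define A where "A = {F. F0 \<subseteq> F \<and> isF F}"
  have F0A: "F0 \<in> A"
  proof -
    have "bot \<notin> F0"
    proof
      assume "bot \<in> F0"
      then obtain xs where xs: "set xs \<subseteq> S" "- foldr sup xs bot \<le> bot" unfolding F0_def by auto
      then have "- foldr sup xs bot = bot" using le_bot by blast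
      then have "foldr sup xs bot = top" by (metis compl_bot_eq double_compl)
      then show False using hS[OF xs(1)] by simp
    qed
    moreover have "\<forall>x y. x \<in> F0 \<longrightarrow> x \<le> y \<longrightarrow> y \<in> F0"
      unfolding F0_def by (auto intro: order_trans)
    moreover have "\<forall>x y. x \<in> F0 \<longrightarrow> y \<in> F0 \<longrightarrow> inf x y \<in> F0"
    proof (intro allI impI)
      fix x y assume "x \<in> F0" "y \<in> F0"
      then obtain xs ys where xs: "set xs \<subseteq> S" "- foldr sup xs bot \<le> x"
        and ys: "set ys \<subseteq> S" "- foldr sup ys bot \<le> y" unfolding F0_def by auto
      have "- foldr sup (xs @ ys) bot = inf (- foldr sup xs bot) (- foldr sup ys bot)"
        by (simp only: join_append compl_sup)
      also have "\<dots> \<le> inf x y" using xs(2) ys(2) by (rule inf_mono)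
      finally show "inf x y \<in> F0" unfolding F0_def using xs(1) ys(1)
        by (intro CollectI exI[of _ "xs @ ys"]) auto
    qed
    ultimately show ?thesis unfolding A_def isF_def by auto
  qed
  have "\<forall>C\<in>chains A. \<exists>U\<in>A. \<forall>X\<in>C. X \<subseteq> U"
  proof
    fix C assume C: "C \<in> chains A"
    show "\<exists>U\<in>A. \<forall>X\<in>C. X \<subseteq> U"
    proof (cases "C = {}")
      case True
      then show ?thesis using F0A by auto
    next
      case False
      have CA: "C \<subseteq> A" and ch: "\<forall>X\<in>C. \<forall>Y\<in>C. X \<subseteq> Y \<or> Y \<subseteq> X"
        using C unfolding chains_def chain_subset_def by auto
      have "\<Union>C \<in> A"
      proof -
        obtain X0 where "X0 \<in> C" using False by auto
        then have "F0 \<subseteq> \<Union>C" using CA unfolding A_def by auto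
        moreover have "bot \<notin> \<Union>C" using CA unfolding A_def isF_def by auto
        moreover have "\<forall>x y. x \<in> \<Union>C \<longrightarrow> x \<le> y \<longrightarrow> y \<in> \<Union>C"
          using CA unfolding A_def isF_def by blast
        moreover have "\<forall>x y. x \<in> \<Union>C \<longrightarrow> y \<in> \<Union>C \<longrightarrow> inf x y \<in> \<Union>C"
        proof (intro allI impI)
          fix x y assume "x \<in> \<Union>C" "y \<in> \<Union>C"
          then obtain X Y where XY: "X \<in> C" "Y \<in> C" "x \<in> X" "y \<in> Y" by auto
          show "inf x y \<in> \<Union>C"
          proof (cases "X \<subseteq> Y")
            case True
            then have "inf x y \<in> Y" using XY CA unfolding A_def isF_def by blast
            then show ?thesis using XY by auto
          next
            case False
            then have "Y \<subseteq> X" using ch XY by blast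
            then have "inf x y \<in> X" using XY CA unfolding A_def isF_def by blast
            then show ?thesis using XY by auto
          qed
        qed
        ultimately show ?thesis unfolding A_def isF_def by blast
      qed
      then show ?thesis by auto
    qed
  qed
  then obtain M where MA: "M \<in> A" and Mmax: "\<forall>X\<in>A. M \<subseteq> X \<longrightarrow> X = M"
    using Zorn_Lemma2[of A] by blast
  have M0: "F0 \<subseteq> M" "bot \<notin> M" and Mup: "\<And>x y. x \<in> M \<Longrightarrow> x \<le> y \<Longrightarrow> y \<in> M"
    and Minf: "\<And>x y. x \<in> M \<Longrightarrow> y \<in> M \<Longrightarrow> inf x y \<in> M"
    using MA unfolding A_def isF_def by auto
  have "top \<in> F0" unfolding F0_def by (intro CollectI exI[of _ "[]"]) simp
  then have topM: "top \<in> M" using M0(1) by blast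
  have compl: "x \<in> M \<or> - x \<in> M" for x
  proof (rule ccontr)
    assume nx: "\<not> (x \<in> M \<or> - x \<in> M)"
    define M' where "M' = {y. \<exists>m\<in>M. inf m x \<le> y}"
    have MM': "M \<subseteq> M'" unfolding M'_def by (auto intro: le_infI1)
    have "M' \<in> A"
    proof -
      have "bot \<notin> M'"
      proof
        assume "bot \<in> M'"
        then obtain m where m: "m \<in> M" "inf m x \<le> bot" unfolding M'_def by auto
        then have "inf m x = bot" using le_bot by blast
        then have "m \<le> - x" by (simp add: inf_shunt)
        then have "- x \<in> M" using Mup m(1) by blast
        then show False using nx by blast
      qed
      moreover have "\<forall>x y. x \<in> M' \<longrightarrow> x \<le> y \<longrightarrow> y \<in> M'"
        unfolding M'_def by (auto intro: order_trans)
      moreover have "\<forall>y z. y \<in> M' \<longrightarrow> z \<in> M' \<longrightarrow> inf y z \<in> M'"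
      proof (intro allI impI)
        fix y z assume "y \<in> M'" "z \<in> M'"
        then obtain m1 m2 where m: "m1 \<in> M" "inf m1 x \<le> y" "m2 \<in> M" "inf m2 x \<le> z"
          unfolding M'_def by auto
        have "inf (inf m1 m2) x \<le> inf y z"
          using m(2,4) by (meson inf_le1 inf_le2 le_inf_iff order_trans)
        then show "inf y z \<in> M'" unfolding M'_def using Minf[OF m(1,3)] by blast
      qed
      ultimately show ?thesis using M0(1) MM' unfolding A_def isF_def by auto
    qed
    then have "M' = M" using Mmax MM' by blast
    moreover have "x \<in> M'" unfolding M'_def using topM by auto
    ultimately show False using nx by blast
  qed
  have "ufilter M" unfolding ufilter_def using M0(2) topM Mup Minf compl by blast
  moreover have "\<forall>x\<in>S. x \<notin> M"
  proof (intro ballI notI)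
    fix x assume xS: "x \<in> S" and xM: "x \<in> M"
    have "- x \<in> F0" unfolding F0_def using xS by (intro CollectI exI[of _ "[x]"]) auto
    then have "- x \<in> M" using M0(1) by blast
    then have "inf x (- x) \<in> M" using Minf xM by blast
    then show False using M0(2) by simp
  qed
  ultimately show ?thesis by blast
qed

lemma uf_props:
  assumes "ufilter U"
  shows "bot \<notin> U" "top \<in> U" "x \<in> U \<Longrightarrow> x \<le> y \<Longrightarrow> y \<in> U"
    "x \<in> U \<Longrightarrow> y \<in> U \<Longrightarrow> inf x y \<in> U" "x \<in> U \<or> - x \<in> U"
  using assms unfolding ufilter_def by blast+

lemma uf_disj: "ufilter U \<Longrightarrow> inf x y = bot \<Longrightarrow> x \<in> U \<Longrightarrow> y \<in> U \<Longrightarrow> False"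
  using uf_props(1,4) by metis

lemma uf_sup: "ufilter U \<Longrightarrow> sup x y \<in> U \<longleftrightarrow> x \<in> U \<or> y \<in> U"
proof
  assume U: "ufilter U" and s: "sup x y \<in> U"
  show "x \<in> U \<or> y \<in> U"
  proof (rule ccontr)
    assume "\<not> (x \<in> U \<or> y \<in> U)"
    then have "- x \<in> U" "- y \<in> U" using uf_props(5)[OF U] by blast+
    then have "inf (- x) (- y) \<in> U" using uf_props(4)[OF U] by blast
    moreover have "inf (sup x y) (inf (- x) (- y)) = bot"
    proof -
      have "inf (- x) (- y) = - sup x y" by simp
      then show ?thesis by (simp only: inf_compl_bot)
    qed
    ultimately show False using uf_disj[OF U] s by blast
  qed
next
  assume U: "ufilter U" and "x \<in> U \<or> y \<in> U"
  then show "sup x y \<in> U" using uf_props(3)[OF U] by (meson sup_ge1 sup_ge2)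
qed

definition umeas :: "'a::boolean_algebra set \<Rightarrow> 'a \<Rightarrow> real" where
  "umeas U x = (if x \<in> U then 1 else 0)"

lemma umeas_prob: "ufilter U \<Longrightarrow> fa_probability (umeas U)"
  unfolding fa_probability_def fa_measure_def umeas_def
  using uf_sup uf_disj uf_props(2) by fastforce

lemma uf_exists_elem:
  fixes t :: "'a::boolean_algebra"
  assumes "t \<noteq> bot"
  shows "\<exists>U. ufilter U \<and> t \<in> U"
proof -
  have "foldr sup xs bot \<noteq> top" if "set xs \<subseteq> {- t}" for xs
  proof
    assume eq: "foldr sup xs bot = top"
    have "foldr sup xs bot \<le> - t" using that by (intro join_le) auto
    then have "- t = top" using eq top_unique by metis
    then have "t = bot" by (metis compl_top_eq double_compl)
    then show False using assms by simp
  qed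
  then obtain U where U: "ufilter U" "\<forall>x\<in>{- t}. x \<notin> U" using ultra_exists[of "{- t}"] by blast
  then have "t \<in> U" using uf_props(5)[OF U(1), of t] by auto
  then show ?thesis using U(1) by blast
qed

lemma seg_contra:
  fixes u0 u1 v0 v1 d :: real
  assumes a: "d \<le> u0" "u1 < d" "v0 < d" "d \<le> v1"
    and all: "\<And>s. 0 \<le> s \<Longrightarrow> s \<le> 1 \<Longrightarrow> d \<le> u0 + s * (u1 - u0) \<or> d \<le> v0 + s * (v1 - v0)"
    and nb: "\<And>s. 0 \<le> s \<Longrightarrow> s \<le> 1 \<Longrightarrow> \<not> (d \<le> u0 + s * (u1 - u0) \<and> d \<le> v0 + s * (v1 - v0))"
  shows False
proof -
  define su where "su = (u0 - d) / (u0 - u1)"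
  define sv where "sv = (d - v0) / (v1 - v0)"
  have su0: "0 \<le> su" "su < 1" using a unfolding su_def by (auto simp: field_simps)
  have sueq: "u0 + su * (u1 - u0) = d" using a unfolding su_def by (auto simp: field_simps)
  have sv0: "0 < sv" "sv \<le> 1" using a unfolding sv_def by (auto simp: field_simps)
  have sveq: "v0 + sv * (v1 - v0) = d" using a unfolding sv_def by (auto simp: field_simps)
  have vsu: "v0 + su * (v1 - v0) < d" using nb[of su] su0 sueq by auto
  have "su * (v1 - v0) < sv * (v1 - v0)" using vsu sveq by linarith
  then have susv: "su < sv" using a by (simp add: mult_less_cancel_right)
  define s where "s = (su + sv) / 2"
  have s01: "0 \<le> s" "s \<le> 1" using su0 sv0 unfolding s_def by auto
  have "s * (u1 - u0) < su * (u1 - u0)" using susv a unfolding s_def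
    by (intro mult_strict_right_mono_neg) auto
  then have u: "u0 + s * (u1 - u0) < d" using sueq by linarith
  have "s * (v1 - v0) < sv * (v1 - v0)" using susv a unfolding s_def
    by (intro mult_strict_right_mono) auto
  then have v: "v0 + s * (v1 - v0) < d" using sveq by linarith
  show False using all[OF s01] u v by linarith
qed

lemma conv_le:
  fixes t a b d :: real
  assumes "0 \<le> t" "t \<le> 1" "a \<le> d" "b \<le> d"
  shows "(1 - t) * a + t * b \<le> d"
proof -
  have "(1 - t) * a \<le> (1 - t) * d" using assms by (intro mult_left_mono) auto
  moreover have "t * b \<le> t * d" using assms by (intro mult_left_mono) auto
  ultimately show ?thesis by (simp add: algebra_simps)
qed

lemma two_fun:
  fixes K :: "'b set" and comb :: "real \<Rightarrow> 'b \<Rightarrow> 'b \<Rightarrow> 'b" and g h :: "'b \<Rightarrow> real"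
  assumes conv: "\<And>s x y. 0 \<le> s \<Longrightarrow> s \<le> 1 \<Longrightarrow> x \<in> K \<Longrightarrow> y \<in> K \<Longrightarrow> comb s x y \<in> K"
    and gaff: "\<And>s x y. 0 \<le> s \<Longrightarrow> s \<le> 1 \<Longrightarrow> x \<in> K \<Longrightarrow> y \<in> K \<Longrightarrow> g (comb s x y) = (1 - s) * g x + s * g y"
    and haff: "\<And>s x y. 0 \<le> s \<Longrightarrow> s \<le> 1 \<Longrightarrow> x \<in> K \<Longrightarrow> y \<in> K \<Longrightarrow> h (comb s x y) = (1 - s) * h x + s * h y"
    and gb: "\<And>x. x \<in> K \<Longrightarrow> 0 \<le> g x \<and> g x \<le> 1"
    and hb: "\<And>x. x \<in> K \<Longrightarrow> 0 \<le> h x \<and> h x \<le> 1"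
    and hyp: "\<And>j N. 0 < N \<Longrightarrow> j \<le> N \<Longrightarrow> \<exists>\<nu>\<in>K. \<delta> \<le> (1 - real j / real N) * g \<nu> + (real j / real N) * h \<nu>"
    and dd: "\<delta>' < \<delta>"
  shows "\<exists>\<nu>\<in>K. \<delta>' \<le> g \<nu> \<and> \<delta>' \<le> h \<nu>"
proof (rule ccontr)
  assume "\<not> ?thesis"
  then have nb: "\<And>\<nu>. \<nu> \<in> K \<Longrightarrow> \<not> (\<delta>' \<le> g \<nu> \<and> \<delta>' \<le> h \<nu>)" by blast
  define f where "f t \<nu> = (1 - t) * g \<nu> + t * h \<nu>" for t \<nu>
  have big: "\<delta>' < g z \<or> \<delta>' < h z" if "0 \<le> t" "t \<le> 1" "\<delta>' < f t z" for t z
  proof (rule ccontr)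
    assume "\<not> (\<delta>' < g z \<or> \<delta>' < h z)"
    then have "f t z \<le> \<delta>'" unfolding f_def using that by (intro conv_le) auto
    then show False using that by simp
  qed
  have same: "\<delta>' \<le> g y" if t: "0 \<le> t" "t \<le> 1" and th: "\<delta>' < \<theta>" and x: "x \<in> K" "\<theta> \<le> f t x" "\<delta>' \<le> g x"
    and y: "y \<in> K" "\<theta> \<le> f t y" for t \<theta> x y
  proof (rule ccontr)
    assume gy: "\<not> \<delta>' \<le> g y"
    have hx: "h x < \<delta>'" using nb[OF x(1)] x(3) by auto
    have hy: "\<delta>' < h y" using big[OF t, of y] th y(2) gy by auto
    show False
    proof (rule seg_contra[of "\<delta>'" "g x" "g y" "h x" "h y"])
      show "\<delta>' \<le> g x" "g y < \<delta>'" "h x < \<delta>'" "\<delta>' \<le> h y" using x(3) gy hx hy by auto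
    next
      fix s :: real assume s: "0 \<le> s" "s \<le> 1"
      have zK: "comb s x y \<in> K" using conv[OF s x(1) y(1)] .
      have gz: "g (comb s x y) = g x + s * (g y - g x)" using gaff[OF s x(1) y(1)] by (simp add: algebra_simps)
      have hz: "h (comb s x y) = h x + s * (h y - h x)" using haff[OF s x(1) y(1)] by (simp add: algebra_simps)
      have "f t (comb s x y) = (1 - s) * f t x + s * f t y"
        unfolding f_def gaff[OF s x(1) y(1)] haff[OF s x(1) y(1)] by (simp add: algebra_simps)
      moreover have "(1 - s) * \<theta> + s * \<theta> \<le> (1 - s) * f t x + s * f t y"
        using s x(2) y(2) by (intro add_mono mult_left_mono) auto
      ultimately have "\<theta> \<le> f t (comb s x y)" by (simp add: algebra_simps)
      then have "\<delta>' < g (comb s x y) \<or> \<delta>' < h (comb s x y)" using big[OF t, of "comb s x y"] th by auto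
      then show "\<delta>' \<le> g x + s * (g y - g x) \<or> \<delta>' \<le> h x + s * (h y - h x)" using gz hz by auto
      show "\<not> (\<delta>' \<le> g x + s * (g y - g x) \<and> \<delta>' \<le> h x + s * (h y - h x))"
        using nb[OF zK] gz hz by auto
    qed
  qed
  obtain N :: nat where N: "inverse (real N) < \<delta> - \<delta>'" "0 < N"
    using dd ex_inverse_of_nat_less[of "\<delta> - \<delta>'"] by auto
  define \<nu> where "\<nu> j = (SOME v. v \<in> K \<and> \<delta> \<le> f (real j / real N) v)" for j
  have \<nu>K: "\<nu> j \<in> K \<and> \<delta> \<le> f (real j / real N) (\<nu> j)" if "j \<le> N" for j
  proof -
    have "\<exists>v. v \<in> K \<and> \<delta> \<le> f (real j / real N) v" using hyp[OF N(2) that] unfolding f_def by blast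
    then show ?thesis unfolding \<nu>_def by (rule someI_ex)
  qed
  have G: "j \<le> N \<Longrightarrow> \<delta>' \<le> g (\<nu> j)" for j
  proof (induction j)
    case 0
    then show ?case using \<nu>K[of 0] dd unfolding f_def by simp
  next
    case (Suc j)
    define t where "t = real j / real N"
    have jN: "j \<le> N" using Suc.prems by simp
    have t01: "0 \<le> t" "t \<le> 1" unfolding t_def using jN N(2) by (auto simp: field_simps)
    have x: "\<nu> j \<in> K" "\<delta> \<le> f t (\<nu> j)" using \<nu>K[OF jN] unfolding t_def by auto
    have y: "\<nu> (Suc j) \<in> K" "\<delta> \<le> f (real (Suc j) / real N) (\<nu> (Suc j))" using \<nu>K[OF Suc.prems] by auto
    have tt: "real (Suc j) / real N = t + inverse (real N)" unfolding t_def using N(2)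
      by (simp add: field_simps)
    have "f (real (Suc j) / real N) (\<nu> (Suc j)) = f t (\<nu> (Suc j)) + inverse (real N) * (h (\<nu> (Suc j)) - g (\<nu> (Suc j)))"
      unfolding tt f_def by (simp add: algebra_simps)
    moreover have "inverse (real N) * (h (\<nu> (Suc j)) - g (\<nu> (Suc j))) \<le> inverse (real N) * 1"
      using gb[OF y(1)] hb[OF y(1)] by (intro mult_left_mono) auto
    ultimately have fy: "\<delta> - inverse (real N) \<le> f t (\<nu> (Suc j))" using y(2) by simp
    have "0 \<le> inverse (real N)" by simp
    then have fx: "\<delta> - inverse (real N) \<le> f t (\<nu> j)" using x(2) by linarith
    show ?case
      using fx same[OF t01, of "\<delta> - inverse (real N)" "\<nu> j" "\<nu> (Suc j)"] x y(1) fy N(1) Suc.IH[OF jN] by auto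
  qed
  have "\<delta>' \<le> g (\<nu> N)" using G by simp
  moreover have "\<delta> \<le> h (\<nu> N)" using \<nu>K[of N] N(2) unfolding f_def by simp
  ultimately show False using nb[of "\<nu> N"] \<nu>K[of N] dd by auto
qed

lemma multi:
  fixes K :: "'b set" and comb :: "real \<Rightarrow> 'b \<Rightarrow> 'b \<Rightarrow> 'b" and hs :: "('b \<Rightarrow> real) list"
  assumes conv: "\<And>s x y. 0 \<le> s \<Longrightarrow> s \<le> 1 \<Longrightarrow> x \<in> K \<Longrightarrow> y \<in> K \<Longrightarrow> comb s x y \<in> K"
    and aff: "\<And>h s x y. h \<in> set hs \<Longrightarrow> 0 \<le> s \<Longrightarrow> s \<le> 1 \<Longrightarrow> x \<in> K \<Longrightarrow> y \<in> K \<Longrightarrow> h (comb s x y) = (1 - s) * h x + s * h y"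
    and bd: "\<And>h x. h \<in> set hs \<Longrightarrow> x \<in> K \<Longrightarrow> 0 \<le> h x \<and> h x \<le> 1"
    and ne: "K \<noteq> {}"
    and hyp: "\<And>c :: nat \<Rightarrow> nat. 0 < (\<Sum>i<length hs. c i) \<Longrightarrow>
       \<exists>\<nu>\<in>K. \<delta> * real (\<Sum>i<length hs. c i) \<le> (\<Sum>i<length hs. real (c i) * (hs ! i) \<nu>)"
    and dd: "\<delta>' < \<delta>"
  shows "\<exists>\<nu>\<in>K. \<forall>i<length hs. \<delta>' \<le> (hs ! i) \<nu>"
  using assms
proof (induction hs arbitrary: K \<delta> \<delta>')
  case Nil
  then show ?case by auto
next
  case (Cons h hs)
  define m where "m = length hs"
  define \<delta>1 where "\<delta>1 = (\<delta> + \<delta>') / 2"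
  have d1: "\<delta>' < \<delta>1" "\<delta>1 < \<delta>" using Cons.prems(6) unfolding \<delta>1_def by auto
  define K' where "K' = {\<nu> \<in> K. \<delta>1 \<le> h \<nu>}"
  have haff: "\<And>s x y. 0 \<le> s \<Longrightarrow> s \<le> 1 \<Longrightarrow> x \<in> K \<Longrightarrow> y \<in> K \<Longrightarrow> h (comb s x y) = (1 - s) * h x + s * h y"
    using Cons.prems(2) by simp
  have hb: "\<And>x. x \<in> K \<Longrightarrow> 0 \<le> h x \<and> h x \<le> 1" using Cons.prems(3) by simp
  have sumS: "(\<Sum>i<length (h # hs). f i) = f 0 + (\<Sum>i<m. f (Suc i))" for f :: "nat \<Rightarrow> 'c::comm_monoid_add"
    unfolding m_def by (simp only: length_Cons sum.lessThan_Suc_shift)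
  have K'ne: "K' \<noteq> {}"
  proof -
    define c :: "nat \<Rightarrow> nat" where "c i = (if i = 0 then 1 else 0)" for i
    have s1: "(\<Sum>i<length (h # hs). c i) = 1" unfolding sumS c_def by simp
    have pos: "0 < (\<Sum>i<length (h # hs). c i)" using s1 by simp
    obtain \<nu> where \<nu>: "\<nu> \<in> K" "\<delta> * real (\<Sum>i<length (h # hs). c i) \<le> (\<Sum>i<length (h # hs). real (c i) * ((h # hs) ! i) \<nu>)"
      using Cons.prems(5)[OF pos] by blast
    have eq: "(\<Sum>i<length (h # hs). real (c i) * ((h # hs) ! i) \<nu>) = h \<nu>" unfolding sumS c_def by simp
    have "\<delta> \<le> h \<nu>" using \<nu>(2) unfolding s1 eq by simp
    then have "\<nu> \<in> K" "\<delta> \<le> h \<nu>" using \<nu>(1) by auto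
    then show ?thesis unfolding K'_def using d1 by auto
  qed
  have conv': "\<And>s x y. 0 \<le> s \<Longrightarrow> s \<le> 1 \<Longrightarrow> x \<in> K' \<Longrightarrow> y \<in> K' \<Longrightarrow> comb s x y \<in> K'"
  proof -
    fix s :: real and x y assume s: "0 \<le> s" "s \<le> 1" and xy: "x \<in> K'" "y \<in> K'"
    have "(1 - s) * \<delta>1 + s * \<delta>1 \<le> (1 - s) * h x + s * h y"
      using s xy unfolding K'_def by (intro add_mono mult_left_mono) auto
    moreover have "h (comb s x y) = (1 - s) * h x + s * h y" using haff[OF s] xy unfolding K'_def by auto
    ultimately have "\<delta>1 \<le> h (comb s x y)" by (simp add: algebra_simps)
    then show "comb s x y \<in> K'" using Cons.prems(1)[OF s] xy unfolding K'_def by auto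
  qed
  have hyp': "\<exists>\<nu>\<in>K'. \<delta>1 * real (\<Sum>i<length hs. c i) \<le> (\<Sum>i<length hs. real (c i) * (hs ! i) \<nu>)"
    if cpos: "0 < (\<Sum>i<length hs. c i)" for c :: "nat \<Rightarrow> nat"
  proof -
    define S where "S = real (\<Sum>i<m. c i)"
    have Spos: "0 < S" using cpos unfolding S_def m_def by (metis of_nat_0_less_iff)
    define g where "g \<nu> = (\<Sum>i<m. real (c i) * (hs ! i) \<nu>) / S" for \<nu>
    have gaff: "g (comb s x y) = (1 - s) * g x + s * g y" if s: "0 \<le> s" "s \<le> 1" and xy: "x \<in> K" "y \<in> K" for s x y
    proof -
      have "(\<Sum>i<m. real (c i) * (hs ! i) (comb s x y)) = (\<Sum>i<m. (1 - s) * (real (c i) * (hs ! i) x) + s * (real (c i) * (hs ! i) y))"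
      proof (rule sum.cong[OF refl])
        fix i assume "i \<in> {..<m}"
        then have "hs ! i \<in> set (h # hs)" unfolding m_def by simp
        then show "real (c i) * (hs ! i) (comb s x y) = (1 - s) * (real (c i) * (hs ! i) x) + s * (real (c i) * (hs ! i) y)"
        proof -
          have "(hs ! i) (comb s x y) = (1 - s) * (hs ! i) x + s * (hs ! i) y" using Cons.prems(2)[OF \<open>hs ! i \<in> set (h # hs)\<close> s xy] .
          then show ?thesis by (simp only:) (simp add: algebra_simps)
        qed
      qed
      then show ?thesis unfolding g_def by (simp add: sum.distrib sum_distrib_left add_divide_distrib)
    qed
    have gb: "0 \<le> g x \<and> g x \<le> 1" if x: "x \<in> K" for x
    proof -
      have b: "0 \<le> (hs ! i) x \<and> (hs ! i) x \<le> 1" if "i < m" for i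
        using Cons.prems(3)[of "hs ! i" x] x that unfolding m_def by simp
      have "0 \<le> (\<Sum>i<m. real (c i) * (hs ! i) x)" using b by (intro sum_nonneg) simp
      moreover have "(\<Sum>i<m. real (c i) * (hs ! i) x) \<le> (\<Sum>i<m. real (c i))"
        using b by (intro sum_mono) (simp add: mult_left_le)
      ultimately show ?thesis unfolding g_def S_def using Spos[unfolded S_def] by simp
    qed
    have hyp2: "\<exists>\<nu>\<in>K. \<delta> \<le> (1 - real j / real N) * g \<nu> + (real j / real N) * h \<nu>" if N: "0 < N" "j \<le> N" for j N
    proof -
      define c2 :: "nat \<Rightarrow> nat" where "c2 i = (if i = 0 then j * (\<Sum>i<m. c i) else (N - j) * c (i - 1))" for i
      have s2: "(\<Sum>i<length (h # hs). c2 i) = N * (\<Sum>i<m. c i)"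
      proof -
        have "(\<Sum>i<length (h # hs). c2 i) = j * (\<Sum>i<m. c i) + (\<Sum>i<m. (N - j) * c i)"
          unfolding sumS c2_def by simp
        also have "\<dots> = j * (\<Sum>i<m. c i) + (N - j) * (\<Sum>i<m. c i)" by (simp add: sum_distrib_left)
        also have "\<dots> = N * (\<Sum>i<m. c i)" using N(2) by (simp add: algebra_simps)
        finally show ?thesis .
      qed
      have "0 < (\<Sum>i<length (h # hs). c2 i)" unfolding s2 using N(1) cpos unfolding m_def by simp
      then obtain \<nu> where \<nu>: "\<nu> \<in> K" "\<delta> * real (\<Sum>i<length (h # hs). c2 i) \<le> (\<Sum>i<length (h # hs). real (c2 i) * ((h # hs) ! i) \<nu>)"
        using Cons.prems(5)[of c2] by blast
      have rhs: "(\<Sum>i<length (h # hs). real (c2 i) * ((h # hs) ! i) \<nu>) = real j * S * h \<nu> + real (N - j) * S * g \<nu>"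
      proof -
        have "(\<Sum>i<length (h # hs). real (c2 i) * ((h # hs) ! i) \<nu>) = real (c2 0) * h \<nu> + (\<Sum>i<m. real (c2 (Suc i)) * (hs ! i) \<nu>)"
          unfolding sumS by simp
        also have "\<dots> = real j * S * h \<nu> + (\<Sum>i<m. real (N - j) * (real (c i) * (hs ! i) \<nu>))"
          unfolding c2_def S_def by (simp only: of_nat_mult mult.assoc nat.simps if_False if_True diff_Suc_1 simp_thms(6))
        also have "\<dots> = real j * S * h \<nu> + real (N - j) * (\<Sum>i<m. real (c i) * (hs ! i) \<nu>)"
          by (simp add: sum_distrib_left)
        also have "\<dots> = real j * S * h \<nu> + real (N - j) * S * g \<nu>" unfolding g_def using Spos by simp
        finally show ?thesis .
      qed
      have "\<delta> * (real N * S) \<le> real j * S * h \<nu> + real (N - j) * S * g \<nu>"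
        using \<nu>(2) unfolding s2 rhs S_def by simp
      then have "\<delta> * real N * S \<le> (real j * h \<nu> + real (N - j) * g \<nu>) * S" by (simp add: algebra_simps)
      then have "\<delta> * real N \<le> real j * h \<nu> + real (N - j) * g \<nu>" using Spos by simp
      then have "\<delta> \<le> (real j * h \<nu> + real (N - j) * g \<nu>) / real N" using N(1) by (simp add: field_simps)
      also have "\<dots> = (1 - real j / real N) * g \<nu> + (real j / real N) * h \<nu>"
        using N by (simp add: field_simps of_nat_diff)
      finally show ?thesis using \<nu>(1) by blast
    qed
    obtain \<nu> where \<nu>: "\<nu> \<in> K" "\<delta>1 \<le> g \<nu>" "\<delta>1 \<le> h \<nu>"
      using two_fun[of K comb g h \<delta> \<delta>1, OF Cons.prems(1) gaff haff gb hb hyp2 d1(2)] by blast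
    have "\<delta>1 * S \<le> (\<Sum>i<m. real (c i) * (hs ! i) \<nu>)" using \<nu>(2) Spos unfolding g_def by (simp add: field_simps)
    then show ?thesis using \<nu> unfolding K'_def S_def m_def by auto
  qed
  have aff': "\<And>h' s x y. h' \<in> set hs \<Longrightarrow> 0 \<le> s \<Longrightarrow> s \<le> 1 \<Longrightarrow> x \<in> K' \<Longrightarrow> y \<in> K' \<Longrightarrow> h' (comb s x y) = (1 - s) * h' x + s * h' y"
    using Cons.prems(2) unfolding K'_def by simp
  have bd': "\<And>h' x. h' \<in> set hs \<Longrightarrow> x \<in> K' \<Longrightarrow> 0 \<le> h' x \<and> h' x \<le> 1"
    using Cons.prems(3) unfolding K'_def by simp
  have IH: "\<exists>\<nu>\<in>K'. \<forall>i<length hs. \<delta>' \<le> (hs ! i) \<nu>"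
    apply (rule Cons.IH[of K' \<delta>1 \<delta>'])
    subgoal by (rule conv')
    subgoal by (rule aff')
    subgoal by (rule bd')
    subgoal by (rule K'ne)
    subgoal by (rule hyp')
    subgoal by (rule d1(1))
    done
  obtain \<nu> where \<nu>: "\<nu> \<in> K'" "\<forall>i<length hs. \<delta>' \<le> (hs ! i) \<nu>"
    using IH by blast
  have "\<forall>i<length (h # hs). \<delta>' \<le> ((h # hs) ! i) \<nu>"
  proof (intro allI impI)
    fix i assume "i < length (h # hs)"
    then show "\<delta>' \<le> ((h # hs) ! i) \<nu>"
      using \<nu> d1 unfolding K'_def by (cases i) auto
  qed
  then show ?case using \<nu>(1) unfolding K'_def by auto
qed

lemma len_filter_rep_concat:
  "length (filter P (concat (map (\<lambda>i. replicate (c i) (xs ! i)) [0..<m]))) =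
   (\<Sum>i<m. if P (xs ! i) then c i else 0)"
proof (induction m)
  case 0 then show ?case by simp
next
  case (Suc m) then show ?case by simp
qed

lemma len_rep_concat:
  "length (concat (map (\<lambda>i. replicate (c i) (xs ! i)) [0..<m])) = (\<Sum>i<m. c i)"
  by (induction m) auto

lemma set_rep_concat:
  "set (concat (map (\<lambda>i. replicate (c i) (xs ! i)) [0..<m])) \<subseteq> (\<lambda>i. xs ! i) ` {..<m}"
  by auto

lemma kelley_fin:
  fixes xs :: "'a::boolean_algebra list"
  assumes nt: "(bot::'a) \<noteq> top" and g: "int_good \<alpha> F" and xs: "set xs \<subseteq> F" and d: "\<delta>' < \<alpha>"
  shows "\<exists>\<nu>. fa_probability \<nu> \<and> (\<forall>x\<in>set xs. \<delta>' \<le> \<nu> x)"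
proof -
  define K where "K = {\<nu> :: 'a \<Rightarrow> real. fa_probability \<nu>}"
  define comb where "comb s \<mu> \<nu> = (\<lambda>x::'a. (1 - s) * \<mu> x + s * \<nu> x)" for s :: real and \<mu> \<nu> :: "'a \<Rightarrow> real"
  define hs where "hs = map (\<lambda>x (\<nu>::'a \<Rightarrow> real). \<nu> x) xs"
  have conv: "comb s x y \<in> K" if s: "0 \<le> s" "s \<le> 1" and xy: "x \<in> K" "y \<in> K" for s x y
  proof -
    have mx: "fa_measure x" "x top = 1" and my: "fa_measure y" "y top = 1"
      using xy unfolding K_def fa_probability_def by auto
    have "\<forall>a. 0 \<le> comb s x y a" unfolding comb_def using s fa_nonneg[OF mx(1)] fa_nonneg[OF my(1)] by simp
    moreover have "\<forall>a b. inf a b = bot \<longrightarrow> comb s x y (sup a b) = comb s x y a + comb s x y b"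
      unfolding comb_def using fa_add[OF mx(1)] fa_add[OF my(1)] by (simp add: algebra_simps)
    moreover have "comb s x y top = 1" unfolding comb_def using mx(2) my(2) by simp
    ultimately show ?thesis unfolding K_def fa_probability_def fa_measure_def by simp
  qed
  have aff: "h (comb s x y) = (1 - s) * h x + s * h y" if "h \<in> set hs" for h s x y
    using that unfolding hs_def comb_def by auto
  have bd: "0 \<le> h x \<and> h x \<le> 1" if hh: "h \<in> set hs" and xK: "x \<in> K" for h x
  proof -
    obtain a where h: "h = (\<lambda>\<nu>. \<nu> a)" using hh by (auto simp: hs_def)
    have mx: "fa_measure x" "x top = 1" using xK unfolding K_def fa_probability_def by auto
    show ?thesis unfolding h using fa_nonneg[OF mx(1)] fa_mono[OF mx(1), of a top] mx(2) by simp
  qed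
  have ne: "K \<noteq> {}"
  proof -
    obtain U where "ufilter U" "(top::'a) \<in> U" using uf_exists_elem[of "top::'a"] nt by metis
    then have "umeas U \<in> K" unfolding K_def by (simp add: umeas_prob)
    then show ?thesis by blast
  qed
  have hyp: "\<exists>\<nu>\<in>K. \<alpha> * real (\<Sum>i<length hs. c i) \<le> (\<Sum>i<length hs. real (c i) * (hs ! i) \<nu>)"
    if cpos: "0 < (\<Sum>i<length hs. c i)" for c :: "nat \<Rightarrow> nat"
  proof -
    define m where "m = length xs"
    have lhs: "length hs = m" unfolding hs_def m_def by simp
    define ys where "ys = concat (map (\<lambda>i. replicate (c i) (xs ! i)) [0..<m])"
    have ly: "length ys = (\<Sum>i<m. c i)" unfolding ys_def by (rule len_rep_concat)
    have ysF: "set ys \<subseteq> F" using set_rep_concat[of c xs m] xs unfolding ys_def m_def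
      by (auto simp: subset_iff)
    obtain I where I: "I \<subseteq> {..<length ys}" "\<alpha> * real (length ys) \<le> real (card I)" "meet_idx ys I \<noteq> bot"
      using g ysF unfolding int_good_def by blast
    obtain U where U: "ufilter U" "meet_idx ys I \<in> U" using uf_exists_elem[OF I(3)] by blast
    have fin: "finite I" using I(1) by (rule finite_subset) simp
    have "I \<subseteq> {j. j < length ys \<and> ys ! j \<in> U}"
    proof
      fix j assume j: "j \<in> I"
      have "meet_idx ys I \<le> ys ! j" using meet_idx_le[OF fin j] .
      then have "ys ! j \<in> U" using uf_props(3)[OF U(1) U(2)] by blast
      then show "j \<in> {j. j < length ys \<and> ys ! j \<in> U}" using j I(1) by auto
    qed
    then have "card I \<le> card {j. j < length ys \<and> ys ! j \<in> U}" by (intro card_mono) auto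
    also have "\<dots> = length (filter (\<lambda>y. y \<in> U) ys)" by (simp add: length_filter_conv_card)
    also have "\<dots> = (\<Sum>i<m. if xs ! i \<in> U then c i else 0)" unfolding ys_def by (rule len_filter_rep_concat)
    finally have cI: "real (card I) \<le> real (\<Sum>i<m. if xs ! i \<in> U then c i else 0)" by linarith
    have "(\<Sum>i<length hs. real (c i) * (hs ! i) (umeas U)) = (\<Sum>i<m. real (if xs ! i \<in> U then c i else 0))"
      unfolding lhs by (intro sum.cong) (auto simp: hs_def m_def umeas_def)
    also have "\<dots> = real (\<Sum>i<m. if xs ! i \<in> U then c i else 0)" by simp
    finally have eq: "(\<Sum>i<length hs. real (c i) * (hs ! i) (umeas U)) = real (\<Sum>i<m. if xs ! i \<in> U then c i else 0)" .
    have "\<alpha> * real (\<Sum>i<length hs. c i) \<le> (\<Sum>i<length hs. real (c i) * (hs ! i) (umeas U))"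
      unfolding eq using I(2) cI unfolding ly lhs by linarith
    moreover have "umeas U \<in> K" unfolding K_def using U(1) by (simp add: umeas_prob)
    ultimately show ?thesis by blast
  qed
  have ex: "\<exists>\<nu>\<in>K. \<forall>i<length hs. \<delta>' \<le> (hs ! i) \<nu>"
    apply (rule multi[of K comb hs \<alpha> \<delta>'])
    subgoal by (rule conv)
    subgoal by (rule aff)
    subgoal by (rule bd)
    subgoal by (rule ne)
    subgoal by (rule hyp)
    subgoal by (rule d)
    done
  obtain \<nu> where \<nu>: "\<nu> \<in> K" "\<forall>i<length hs. \<delta>' \<le> (hs ! i) \<nu>"
    using ex by blast
  have "\<forall>x\<in>set xs. \<delta>' \<le> \<nu> x"
  proof
    fix x assume "x \<in> set xs"
    then obtain i where i: "i < length xs" "xs ! i = x" by (auto simp: in_set_conv_nth)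
    then show "\<delta>' \<le> \<nu> x" using \<nu>(2) unfolding hs_def by auto
  qed
  then show ?thesis using \<nu>(1) unfolding K_def by blast
qed

lemma tree:
  assumes spl: "\<forall>n. \<forall>a\<in>B n. \<exists>b\<in>B (Suc n). \<exists>c\<in>B (Suc n). inf b c = bot \<and> sup b c \<le> a"
  shows "a \<in> B n \<Longrightarrow> \<exists>ps. length ps = 2 ^ k \<and> set ps \<subseteq> B (n + k) \<and> pdj ps \<and> (\<forall>p\<in>set ps. p \<le> (a::'a::boolean_algebra))"
proof (induction k arbitrary: n a)
  case 0
  then show ?case by (intro exI[of _ "[a]"]) simp
next
  case (Suc k)
  obtain b c where bc: "b \<in> B (Suc n)" "c \<in> B (Suc n)" "inf b c = bot" "sup b c \<le> a"
    using spl Suc.prems by blast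
  obtain ps where ps: "length ps = 2 ^ k" "set ps \<subseteq> B (Suc n + k)" "pdj ps" "\<forall>p\<in>set ps. p \<le> b"
    using Suc.IH[OF bc(1)] by blast
  obtain qs where qs: "length qs = 2 ^ k" "set qs \<subseteq> B (Suc n + k)" "pdj qs" "\<forall>p\<in>set qs. p \<le> c"
    using Suc.IH[OF bc(2)] by blast
  have d: "\<forall>x\<in>set ps. \<forall>y\<in>set qs. inf x y = bot"
  proof (intro ballI)
    fix x y assume "x \<in> set ps" "y \<in> set qs"
    then have "inf x y \<le> inf b c" using ps(4) qs(4) by (intro inf_mono) auto
    then show "inf x y = bot" using bc(3) le_bot by auto
  qed
  have le: "\<forall>p\<in>set (ps @ qs). p \<le> a"
  proof
    fix p assume "p \<in> set (ps @ qs)"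
    then have "p \<le> sup b c" using ps(4) qs(4) by (auto intro: le_supI1 le_supI2)
    then show "p \<le> a" using bc(4) by (rule order_trans)
  qed
  show ?case
    using ps qs d le by (intro exI[of _ "ps @ qs"]) (auto simp: pdj_append)
qed

lemma le_eps: "(\<And>\<epsilon>. 0 < \<epsilon> \<Longrightarrow> y - \<epsilon> \<le> x) \<Longrightarrow> y \<le> (x::real)"
proof (rule ccontr)
  assume h: "\<And>\<epsilon>. 0 < \<epsilon> \<Longrightarrow> y - \<epsilon> \<le> x" and "\<not> y \<le> x"
  then have pos: "0 < (y - x) / 2" by simp
  have "y - (y - x) / 2 \<le> x" using h[OF pos] .
  then have "y \<le> x" by (simp add: field_simps)
  then show False using \<open>\<not> y \<le> x\<close> by simp
qed

lemma good_below:
  assumes "int_num F \<ge> ereal c" "\<delta>' < c"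
  shows "\<exists>\<alpha>. \<delta>' < \<alpha> \<and> int_good \<alpha> F"
proof -
  have "ereal \<delta>' < ereal c" using assms(2) by simp
  then have "ereal \<delta>' < int_num F" using assms(1) by (rule less_le_trans)
  then obtain s where "s \<in> {ereal \<alpha> | \<alpha>. \<alpha> \<ge> 0 \<and> int_good \<alpha> F}" "ereal \<delta>' < s"
    unfolding int_num_def by (auto simp: less_Sup_iff)
  then show ?thesis by auto
qed

lemma sum_list_if: "sum_list (map (\<lambda>p. if P p then 0 else c) ps) = c * real (length (filter (\<lambda>p. \<not> P p) ps))"
  by (induction ps) (auto simp: algebra_simps)

lemma pdj_uf: "ufilter U \<Longrightarrow> pdj ps \<Longrightarrow> length (filter (\<lambda>p. p \<in> U) ps) \<le> 1"
proof (induction ps)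
  case Nil then show ?case by simp
next
  case (Cons x xs)
  show ?case
  proof (cases "x \<in> U")
    case True
    have "filter (\<lambda>p. p \<in> U) xs = []"
    proof (rule ccontr)
      assume "filter (\<lambda>p. p \<in> U) xs \<noteq> []"
      then obtain y where "y \<in> set xs" "y \<in> U" by (metis filter_False)
      then show False using Cons.prems True uf_disj by auto
    qed
    then show ?thesis using True by simp
  next
    case False
    then show ?thesis using Cons by simp
  qed
qed

lemma tree_bound: "fa_measure \<nu> \<Longrightarrow> pdj ps \<Longrightarrow> (\<forall>p\<in>set ps. p \<le> a) \<Longrightarrow> sum_list (map \<nu> ps) \<le> \<nu> a"
  using fa_join[of \<nu> ps] fa_mono[of \<nu> "foldr sup ps bot" a] join_le[of ps a] by simp

lemma compact_box: "compact {\<nu>::'a \<Rightarrow> real. \<forall>a. 0 \<le> \<nu> a \<and> \<nu> a \<le> 1}"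
proof -
  have "compactin (product_topology (\<lambda>i. euclidean) (UNIV::'a set)) (PiE UNIV (\<lambda>_. {0..1::real}))"
    by (simp add: compactin_PiE compact_Icc)
  then have "compact (PiE (UNIV::'a set) (\<lambda>_. {0..1::real}))"
    by (simp add: euclidean_product_topology compactin_euclidean_iff)
  moreover have "PiE (UNIV::'a set) (\<lambda>_. {0..1::real}) = {\<nu>. \<forall>a. 0 \<le> \<nu> a \<and> \<nu> a \<le> 1}"
    by (auto simp: PiE_def Pi_def extensional_def)
  ultimately show ?thesis by simp
qed

lemma cont_coord: "continuous_on UNIV (\<lambda>\<nu>::'a \<Rightarrow> real. \<nu> a)"
  by simp

lemma closed_ge: "closed {\<nu> :: 'a \<Rightarrow> real. c \<le> \<nu> a}"
  by (rule closed_Collect_le) (simp_all add: cont_coord)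

lemma closed_add: "closed {\<nu>::'a::boolean_algebra \<Rightarrow> real. \<forall>a b. inf a b = bot \<longrightarrow> \<nu> (sup a b) = \<nu> a + \<nu> b}"
proof (intro closed_Collect_all)
  fix a b :: 'a
  show "closed {\<nu>::'a \<Rightarrow> real. inf a b = bot \<longrightarrow> \<nu> (sup a b) = \<nu> a + \<nu> b}"
  proof (cases "inf a b = bot")
    case True
    have "closed {\<nu>::'a \<Rightarrow> real. \<nu> (sup a b) = \<nu> a + \<nu> b}"
      by (intro closed_Collect_eq cont_coord continuous_on_add)
    then show ?thesis using True by simp
  next
    case False
    then show ?thesis by simp
  qed
qed

lemma backward:
  fixes B :: "nat \<Rightarrow> 'a::boolean_algebra set"
  assumes nt: "(bot::'a) \<noteq> top"
    and cov: "(\<Union>n. B n) = UNIV - {bot}"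
    and intB: "\<forall>n. int_num (B n) \<ge> ereal ((1/2) ^ n)"
    and spl: "\<forall>n. \<forall>a\<in>B n. \<exists>b\<in>B (Suc n). \<exists>c\<in>B (Suc n). inf b c = bot \<and> sup b c \<le> a"
  shows "\<exists>\<mu> :: 'a \<Rightarrow> real. fa_probability \<mu> \<and> strictly_positive \<mu> \<and> nonatomic \<mu>"
proof -
  define Box where "Box = {\<nu>::'a \<Rightarrow> real. \<forall>a. 0 \<le> \<nu> a \<and> \<nu> a \<le> 1}"
  define Add where "Add = {\<nu>::'a \<Rightarrow> real. \<forall>a b. inf a b = bot \<longrightarrow> \<nu> (sup a b) = \<nu> a + \<nu> b}"
  define M where "M = Box \<inter> Add"
  define Cs where "Cs = (\<lambda>(n::nat, a::'a, \<epsilon>::real). {\<nu>::'a \<Rightarrow> real. (1/2) ^ n - \<epsilon> \<le> \<nu> a})"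
  define T where "T = {(n, a, \<epsilon>::real). a \<in> B n \<and> 0 < \<epsilon>}"
  define Kst where "Kst = M \<inter> \<Inter> (Cs ` T)"
  have Mfa: "fa_measure \<nu>" if "\<nu> \<in> M" for \<nu>
    using that unfolding M_def Box_def Add_def fa_measure_def by auto
  have compM: "compact M" unfolding M_def Box_def Add_def
    by (rule compact_Int_closed[OF compact_box closed_add])
  have closedC: "\<forall>C\<in>Cs ` T. closed C" unfolding Cs_def by (auto intro: closed_ge)
  have fip: "M \<inter> \<Inter> (Cs ` S) \<noteq> {}" if S: "S \<subseteq> T" "finite S" for S
  proof -
    obtain L where L: "set L = S" using finite_list[OF S(2)] by blast
    define k where "k = Max (insert 0 (fst ` S))"
    define \<epsilon>0 where "\<epsilon>0 = Min (insert 1 ((\<lambda>t. snd (snd t)) ` S))"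
    have nk: "n \<le> k" if "(n, a, \<epsilon>) \<in> S" for n a \<epsilon>
      unfolding k_def using S(2) that by (intro Max_ge) (auto simp: image_iff intro: bexI[of _ "(n, a, \<epsilon>)"])
    have e0: "0 < \<epsilon>0" unfolding \<epsilon>0_def using S unfolding T_def by (subst Min_gr_iff) auto
    have e0le: "\<epsilon>0 \<le> \<epsilon>" if "(n, a, \<epsilon>) \<in> S" for n a \<epsilon>
      unfolding \<epsilon>0_def using S(2) that by (intro Min_le) (auto simp: image_iff intro: bexI[of _ "(n, a, \<epsilon>)"])
    have e01: "\<epsilon>0 \<le> 1" unfolding \<epsilon>0_def using S(2) by (intro Min_le) auto
    define P where "P t ps \<longleftrightarrow> length ps = 2 ^ (k - fst t) \<and> set ps \<subseteq> B k \<and> pdj ps \<and> (\<forall>p\<in>set ps. p \<le> fst (snd t))" for t :: "nat \<times> 'a \<times> real" and ps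
    have Pex: "\<exists>ps. P t ps" if "t \<in> S" for t
    proof -
      obtain n a \<epsilon> where t: "t = (n, a, \<epsilon>)" by (cases t) auto
      have a: "a \<in> B n" using that S(1) unfolding t T_def by auto
      have "n \<le> k" using nk that unfolding t by auto
      then have "n + (k - n) = k" by simp
      then show ?thesis using tree[OF spl a, of "k - n"] unfolding P_def t by auto
    qed
    define tr where "tr t = (SOME ps. P t ps)" for t
    have trP: "P t (tr t)" if "t \<in> S" for t unfolding tr_def using Pex[OF that] by (rule someI_ex)
    define xs where "xs = concat (map tr L)"
    have xsB: "set xs \<subseteq> B k"
    proof
      fix x assume "x \<in> set xs"
      then obtain t where t: "t \<in> set L" "x \<in> set (tr t)" unfolding xs_def by auto
      then have "P t (tr t)" using trP L by blast
      then show "x \<in> B k" using t(2) unfolding P_def by blast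
    qed
    define \<delta>' where "\<delta>' = (1/2) ^ k * (1 - \<epsilon>0)"
    have "\<delta>' < (1/2) ^ k" unfolding \<delta>'_def using e0 by simp
    then obtain \<alpha> where \<alpha>: "\<delta>' < \<alpha>" "int_good \<alpha> (B k)" using good_below[OF intB[rule_format, of k]] by blast
    obtain \<nu> where \<nu>: "fa_probability \<nu>" "\<forall>x\<in>set xs. \<delta>' \<le> \<nu> x"
      using kelley_fin[OF nt \<alpha>(2) xsB \<alpha>(1)] by blast
    have fm: "fa_measure \<nu>" and t1: "\<nu> top = 1" using \<nu>(1) unfolding fa_probability_def by auto
    have "\<nu> \<in> M" unfolding M_def Box_def Add_def
      using fa_nonneg[OF fm] fa_mono[OF fm, of _ top] t1 fa_add[OF fm] by auto
    moreover have "\<nu> \<in> Cs t" if tS: "t \<in> S" for t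
    proof -
      obtain n a \<epsilon> where t: "t = (n, a, \<epsilon>)" by (cases t) auto
      have Pt: "P t (tr t)" using trP[OF tS] .
      have nk': "n \<le> k" using nk tS unfolding t by auto
      have ge: "\<forall>x\<in>set (tr t). \<delta>' \<le> \<nu> x" using \<nu>(2) tS L unfolding xs_def by auto
      have "sum_list (map (\<lambda>_. \<delta>') (tr t)) \<le> sum_list (map \<nu> (tr t))"
        using ge by (intro sum_list_mono) auto
      also have "\<dots> \<le> \<nu> a" using tree_bound[OF fm] Pt unfolding P_def t by auto
      finally have "real (2 ^ (k - n)) * \<delta>' \<le> \<nu> a" using Pt unfolding P_def t by (simp add: sum_list_triv)
      moreover have "real (2 ^ (k - n)) * \<delta>' = (1/2) ^ n * (1 - \<epsilon>0)"
      proof -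
        have "(1/2::real) ^ k = (1/2) ^ n * (1/2) ^ (k - n)" using nk' by (simp add: power_add[symmetric])
        then have "real (2 ^ (k - n)) * (1/2::real) ^ k = (1/2) ^ n" by (simp add: power_one_over)
        then show ?thesis unfolding \<delta>'_def by (simp add: mult.assoc[symmetric])
      qed
      moreover have "(1/2::real) ^ n * \<epsilon>0 \<le> \<epsilon>"
      proof -
        have "(1/2::real) ^ n * \<epsilon>0 \<le> 1 * \<epsilon>0" using e0 by (intro mult_right_mono) (auto simp: power_le_one)
        then show ?thesis using e0le[of n a \<epsilon>] tS unfolding t by simp
      qed
      ultimately have "(1/2) ^ n - \<epsilon> \<le> \<nu> a" by (simp add: algebra_simps)
      then show ?thesis unfolding Cs_def t by simp
    qed
    ultimately show ?thesis by blast
  qed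
  have Kne: "Kst \<noteq> {}"
  proof -
    have "\<forall>B'\<subseteq>Cs ` T. finite B' \<longrightarrow> M \<inter> \<Inter> B' \<noteq> {}"
    proof (intro allI impI)
      fix B' assume "B' \<subseteq> Cs ` T" "finite B'"
      then obtain S where "S \<subseteq> T" "finite S" "B' = Cs ` S" using finite_subset_image by metis
      then show "M \<inter> \<Inter> B' \<noteq> {}" using fip by blast
    qed
    then have fipall: "\<forall>B'\<subseteq>Cs ` T. finite B' \<longrightarrow> M \<inter> \<Inter> B' \<noteq> {}" .
    have cf: "(\<forall>a\<in>Cs ` T. closed a) \<longrightarrow> (\<forall>B'\<subseteq>Cs ` T. finite B' \<longrightarrow> M \<inter> \<Inter> B' \<noteq> {}) \<longrightarrow> M \<inter> \<Inter> (Cs ` T) \<noteq> {}"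
      using compM[unfolded compact_fip] by (rule spec)
    show ?thesis unfolding Kst_def by (rule cf[THEN mp, THEN mp, OF closedC fipall])
  qed
  have compK: "compact Kst" unfolding Kst_def
    using compM closedC by (intro compact_Int_closed closed_Inter) auto
  obtain \<nu>0 where \<nu>0: "\<nu>0 \<in> Kst" "\<forall>y\<in>Kst. \<nu>0 top \<le> y top"
    using continuous_attains_inf[OF compK Kne, of "\<lambda>\<nu>. \<nu> top"] by (auto intro: continuous_on_subset[OF cont_coord])
  have inK: "\<nu> \<in> Kst" if inM: "\<nu> \<in> M" and lowv: "\<And>n a. a \<in> B n \<Longrightarrow> (1/2) ^ n \<le> \<nu> a" for \<nu>
  proof -
    have "\<nu> \<in> Cs t" if tT: "t \<in> T" for t
    proof -
      obtain n a \<epsilon> where t: "t = (n, a, \<epsilon>)" by (cases t) auto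
      have "a \<in> B n" "0 < \<epsilon>" using tT unfolding t T_def by auto
      then have "(1/2) ^ n - \<epsilon> \<le> \<nu> a" using lowv[of a n] by linarith
      then show ?thesis unfolding t Cs_def by simp
    qed
    then show ?thesis unfolding Kst_def using inM by blast
  qed
  have fm0: "fa_measure \<nu>0" using \<nu>0(1) Mfa unfolding Kst_def by blast
  have le1: "\<nu>0 a \<le> 1" for a using \<nu>0(1) unfolding Kst_def M_def Box_def by blast
  have lowB: "(1/2) ^ n \<le> \<nu>0 a" if "a \<in> B n" for n a
  proof (rule le_eps)
    fix \<epsilon> :: real assume "0 < \<epsilon>"
    then have "(n, a, \<epsilon>) \<in> T" using that unfolding T_def by simp
    then have "\<nu>0 \<in> Cs (n, a, \<epsilon>)" using \<nu>0(1) unfolding Kst_def by blast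
    then show "(1/2) ^ n - \<epsilon> \<le> \<nu>0 a" unfolding Cs_def by simp
  qed
  have pos: "0 < \<nu>0 a" if "a \<noteq> bot" for a
  proof -
    have "a \<in> UNIV - {bot}" using that by simp
    then have "a \<in> (\<Union>n. B n)" by (simp only: cov)
    then obtain n where "a \<in> B n" by blast
    moreover have "(0::real) < (1/2) ^ n" by simp
    ultimately show ?thesis using lowB[of a n] by linarith
  qed
  have tpos: "0 < \<nu>0 top" using pos[of top] nt by auto
  have nonat: "\<exists>ps. finite_partition_of_unit ps \<and> (\<forall>p\<in>set ps. \<nu>0 p < \<epsilon>)" if epos: "0 < \<epsilon>" for \<epsilon>
  proof (rule ccontr)
    assume nop: "\<not> ?thesis"
    define S where "S = {a. \<nu>0 a < \<epsilon>}"
    have hS: "foldr sup xs bot \<noteq> top" if xsS: "set xs \<subseteq> S" for xs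
    proof
      assume jt: "foldr sup xs bot = top"
      have "finite_partition_of_unit (disj xs)"
        unfolding finite_partition_of_unit_def using disj_join[of xs] jt disj_pdj[of xs] by (simp add: pdj_nth[symmetric])
      moreover have "\<forall>p\<in>set (disj xs). \<nu>0 p < \<epsilon>"
      proof
        fix p assume "p \<in> set (disj xs)"
        then obtain x where "x \<in> set xs" "p \<le> x" using disj_le by blast
        then show "\<nu>0 p < \<epsilon>" using xsS fa_mono[OF fm0, of p x] unfolding S_def by auto
      qed
      ultimately show False using nop by blast
    qed
    obtain U where U: "ufilter U" "\<forall>x\<in>S. x \<notin> U" using ultra_exists[of S] hS by blast
    define \<nu>' where "\<nu>' x = \<nu>0 x - \<epsilon> * umeas U x" for x
    have um: "fa_measure (umeas U)" using umeas_prob[OF U(1)] unfolding fa_probability_def by auto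
    have nn: "0 \<le> \<nu>' x" for x
    proof (cases "x \<in> U")
      case True
      then have "x \<notin> S" using U(2) by blast
      then have "\<epsilon> \<le> \<nu>0 x" unfolding S_def by simp
      then show ?thesis unfolding \<nu>'_def umeas_def using True by simp
    next
      case False
      then show ?thesis unfolding \<nu>'_def umeas_def using fa_nonneg[OF fm0] by simp
    qed
    have fm': "fa_measure \<nu>'" unfolding fa_measure_def
      using nn fa_add[OF fm0] fa_add[OF um] unfolding \<nu>'_def by (simp add: algebra_simps)
    have "\<nu>' \<in> M" unfolding M_def Box_def Add_def
    proof (intro IntI CollectI allI impI conjI)
      fix a show "0 \<le> \<nu>' a" by (rule nn)
      show "\<nu>' a \<le> 1" using le1[of a] epos unfolding \<nu>'_def umeas_def by simp
    next
      fix a b :: 'a assume "inf a b = bot"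
      then show "\<nu>' (sup a b) = \<nu>' a + \<nu>' b" using fa_add[OF fm'] by simp
    qed
    moreover have "(1/2) ^ n \<le> \<nu>' a" if aB: "a \<in> B n" for n a
    proof (rule le_eps)
      fix \<epsilon>1 :: real assume e1: "0 < \<epsilon>1"
      obtain k where k: "(1/2::real) ^ k < \<epsilon>1" using real_arch_pow_inv[OF e1, of "1/2"] by auto
      obtain ps where ps: "length ps = 2 ^ k" "set ps \<subseteq> B (n + k)" "pdj ps" "\<forall>p\<in>set ps. p \<le> a"
        using tree[OF spl aB] by blast
      have "sum_list (map (\<lambda>p. if p \<in> U then 0 else (1/2) ^ (n + k)) ps) \<le> sum_list (map \<nu>' ps)"
      proof (rule sum_list_mono)
        fix p assume p: "p \<in> set ps"
        show "(if p \<in> U then 0 else (1/2) ^ (n + k)) \<le> \<nu>' p"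
        proof (cases "p \<in> U")
          case True then show ?thesis using nn by simp
        next
          case False
          have "(1/2) ^ (n + k) \<le> \<nu>0 p" using lowB ps(2) p by blast
          then show ?thesis using False unfolding \<nu>'_def umeas_def by simp
        qed
      qed
      also have "\<dots> \<le> \<nu>' a" using tree_bound[OF fm' ps(3,4)] .
      finally have s: "(1/2) ^ (n + k) * real (length (filter (\<lambda>p. p \<notin> U) ps)) \<le> \<nu>' a"
        by (simp add: sum_list_if)
      have "length (filter (\<lambda>p. p \<in> U) ps) \<le> 1" using pdj_uf[OF U(1) ps(3)] .
      then have cnt: "2 ^ k - 1 \<le> length (filter (\<lambda>p. p \<notin> U) ps)"
        using sum_length_filter_compl[of "\<lambda>p. p \<in> U" ps] ps(1) by linarith
      have "(1/2::real) ^ (n + k) * real (2 ^ k - 1) \<le> (1/2) ^ (n + k) * real (length (filter (\<lambda>p. p \<notin> U) ps))"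
      proof (rule mult_left_mono)
        show "real (2 ^ k - 1) \<le> real (length (filter (\<lambda>p. p \<notin> U) ps))" using cnt by (simp only: of_nat_le_iff)
      qed simp
      moreover have "(1/2::real) ^ (n + k) * real (2 ^ k - 1) = (1/2) ^ n - (1/2) ^ (n + k)"
      proof -
        have "(1::nat) \<le> 2 ^ k" by simp
        then have "real (2 ^ k - 1) = 2 ^ k - 1" by (simp add: of_nat_diff)
        moreover have "(1/2::real) ^ (n + k) * 2 ^ k = (1/2) ^ n"
          by (simp add: power_add power_one_over)
        ultimately show ?thesis by (simp add: algebra_simps)
      qed
      moreover have "(1/2::real) ^ (n + k) \<le> (1/2) ^ k" by (simp add: power_decreasing)
      ultimately show "(1/2) ^ n - \<epsilon>1 \<le> \<nu>' a" using s k by linarith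
    qed
    ultimately have "\<nu>' \<in> Kst" by (intro inK) auto
    moreover have "\<nu>' top < \<nu>0 top" unfolding \<nu>'_def umeas_def using uf_props(2)[OF U(1)] epos by simp
    moreover have "\<nu>0 top \<le> \<nu>' top" using \<nu>0(2) calculation(1) by blast
    ultimately show False by linarith
  qed
  define \<mu> where "\<mu> x = \<nu>0 x / \<nu>0 top" for x
  have "fa_probability \<mu>"
    unfolding fa_probability_def fa_measure_def \<mu>_def
    using fa_nonneg[OF fm0] fa_add[OF fm0] tpos by (simp add: add_divide_distrib)
  moreover have "strictly_positive \<mu>" unfolding strictly_positive_def \<mu>_def using pos tpos by simp
  moreover have "nonatomic \<mu>" unfolding nonatomic_def
  proof (intro allI impI)
    fix \<epsilon> :: real assume "0 < \<epsilon>"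
    then obtain ps where ps: "finite_partition_of_unit ps" "\<forall>p\<in>set ps. \<nu>0 p < \<epsilon> * \<nu>0 top"
      using nonat[of "\<epsilon> * \<nu>0 top"] tpos by auto
    have "\<forall>p\<in>set ps. \<mu> p < \<epsilon>" unfolding \<mu>_def using ps(2) tpos by (simp add: divide_less_eq)
    then show "\<exists>ps. finite_partition_of_unit ps \<and> (\<forall>p\<in>set ps. \<mu> p < \<epsilon>)" using ps(1) by blast
  qed
  ultimately show ?thesis by blast
qed

theorem theorem4p1:
  assumes nontriv: "(bot::'a::boolean_algebra) \<noteq> top"
  shows "(\<exists>\<mu> :: 'a \<Rightarrow> real. fa_probability \<mu> \<and> strictly_positive \<mu> \<and> nonatomic \<mu>)
     \<longleftrightarrow>
     (\<exists>B :: nat \<Rightarrow> 'a set. (\<Union>n. B n) = UNIV - {bot} \<and>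
        (\<forall>n. B n \<subseteq> B (Suc n)) \<and>
        (\<forall>n. int_num (B n) \<ge> ereal ((1/2) ^ n)) \<and>
        (\<forall>n. \<forall>a\<in>B n. \<exists>b\<in>B (Suc n). \<exists>c\<in>B (Suc n). inf b c = bot \<and> sup b c \<le> a))"
proof
  assume "\<exists>\<mu> :: 'a \<Rightarrow> real. fa_probability \<mu> \<and> strictly_positive \<mu> \<and> nonatomic \<mu>"
  then obtain \<mu> :: "'a \<Rightarrow> real" where "fa_probability \<mu>" "strictly_positive \<mu>" "nonatomic \<mu>" by blast
  then show "\<exists>B :: nat \<Rightarrow> 'a set. (\<Union>n. B n) = UNIV - {bot} \<and>
        (\<forall>n. B n \<subseteq> B (Suc n)) \<and>
        (\<forall>n. int_num (B n) \<ge> ereal ((1/2) ^ n)) \<and>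
        (\<forall>n. \<forall>a\<in>B n. \<exists>b\<in>B (Suc n). \<exists>c\<in>B (Suc n). inf b c = bot \<and> sup b c \<le> a)"
    by (rule forward[OF nontriv])
next
  assume "\<exists>B :: nat \<Rightarrow> 'a set. (\<Union>n. B n) = UNIV - {bot} \<and>
        (\<forall>n. B n \<subseteq> B (Suc n)) \<and>
        (\<forall>n. int_num (B n) \<ge> ereal ((1/2) ^ n)) \<and>
        (\<forall>n. \<forall>a\<in>B n. \<exists>b\<in>B (Suc n). \<exists>c\<in>B (Suc n). inf b c = bot \<and> sup b c \<le> a)"
  then obtain B :: "nat \<Rightarrow> 'a set" where B: "(\<Union>n. B n) = UNIV - {bot}"
    "\<forall>n. int_num (B n) \<ge> ereal ((1/2) ^ n)"
    "\<forall>n. \<forall>a\<in>B n. \<exists>b\<in>B (Suc n). \<exists>c\<in>B (Suc n). inf b c = bot \<and> sup b c \<le> a"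
    by blast
  show "\<exists>\<mu> :: 'a \<Rightarrow> real. fa_probability \<mu> \<and> strictly_positive \<mu> \<and> nonatomic \<mu>"
    by (rule backward[OF nontriv B(1) B(2) B(3)])
qed

end
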